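(* Let $X_A$ and $X_B$ be locally compact Hausdorff topological spaces and $X = X_A \times X_B$. Let $\mathscr{S}$ denote the set of states on the $C^*$-algebra $C_b(X)$ and $\mathscr{S}_A$ the set of states on $C_b(X_A)$. Let $\tau : \mathscr{S} \to \mathscr{S}$ be an operation and let $w_A \in \mathscr{S}_A$. Then there is a state $w \in \mathscr{S}$ such that $$ w(f_A \otimes 1) = w_A(f_A) \quad \text{for all } f_A \in C_b(X_A), $$ and $$ \tau(w)(1 \otimes f_B) = w(1 \otimes f_B) \quad \text{for all } f_B \in C_b(X_B). $$
   Context: For a locally compact Hausdorff space $Y$, $C_b(Y)$ is the commutative unital $C^*$-algebra of bounded continuous functions $Y \to \mathbb{C}$ with pointwise operations, complex conjugation as involution and the sup norm; its unit is the constant function $1$. A state on a unital $C^*$-algebra ${\sf A}$ is a linear functional $w : {\sf A} \to \mathbb{C}$ with $w(f^*f) \ge 0$ for all $f$ and $w(1) = 1$ (states need not be given by probability measures). For $f_A \in C_b(X_A)$, $f_B \in C_b(X_B)$, $f_A \otimes f_B \in C_b(X_A \times X_B)$ denotes the function $(x_A,x_B) \mapsto f_A(x_A) f_B(x_B)$. A generalized sequence (net) $\{w_\kappa\}$ of states converges weakly to $w$ if $w_\kappa(f) \to w(f)$ for every $f$. An operation is a map $\tau : \mathscr{S} \to \mathscr{S}$ that preserves finite convex combinations, $\tau(\sum_k \lambda_k w_k) = \sum_k \lambda_k \tau(w_k)$ for $\lambda_k \ge 0$, $\sum_k \lambda_k = 1$, and is weakly continuous: whenever a net $\{w_\kappa\}$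 in $\mathscr{S}$ converges weakly, $\{\tau(w_\kappa)\}$ converges weakly and $\lim_\kappa \tau(w_\kappa)(f) = \tau(\lim_\kappa w_\kappa)(f)$ for all $f \in C_b(X)$. *)

theory Defs
  imports "HOL-Analysis.Analysis"
begin

definition Cb :: "('a::topological_space \<Rightarrow> complex) set" where
  "Cb = {f. continuous_on UNIV f \<and> bounded (range f)}"

text \<open>A state is represented as a functional on all functions
  Y \<Rightarrow> complex which is linear and positive on C_b(Y), maps the unit to 1,
  and is (by normalisation) 0 outside C_b(Y); thus states in the sense of the paper
  correspond bijectively to functionals satisfying is_state.\<close>
definition is_state :: "(('a::topological_space \<Rightarrow> complex) \<Rightarrow> complex) \<Rightarrow> bool" where
  "is_state w \<longleftrightarrow>
     (\<forall>f\<in>Cb. \<forall>g\<in>Cb. w (\<lambda>x. f x + g x) = w f + w g) \<and>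
     (\<forall>c. \<forall>f\<in>Cb. w (\<lambda>x. c * f x) = c * w f) \<and>
     (\<forall>f\<in>Cb. Im (w (\<lambda>x. cnj (f x) * f x)) = 0 \<and> Re (w (\<lambda>x. cnj (f x) * f x)) \<ge> 0) \<and>
     w (\<lambda>x. 1) = 1 \<and>
     (\<forall>f. f \<notin> Cb \<longrightarrow> w f = 0)"

definition states :: "(('a::topological_space \<Rightarrow> complex) \<Rightarrow> complex) set" where
  "states = {w. is_state w}"

text \<open>Weak convergence of a net of states to w. Nets are represented by filters
  (a net \<kappa> \<mapsto> w_\<kappa> is represented by its image filter on the state space).\<close>
definition weakly_converges ::
  "(('a::topological_space \<Rightarrow> complex) \<Rightarrow> complex) filter \<Rightarrow>
   (('a \<Rightarrow> complex) \<Rightarrow> complex) \<Rightarrow> bool" where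
  "weakly_converges F w \<longleftrightarrow> (\<forall>f\<in>Cb. ((\<lambda>v. v f) \<longlongrightarrow> w f) F)"

definition operation ::
  "((('a::topological_space \<Rightarrow> complex) \<Rightarrow> complex) \<Rightarrow> (('a \<Rightarrow> complex) \<Rightarrow> complex)) \<Rightarrow> bool" where
  "operation \<tau> \<longleftrightarrow>
     (\<forall>w\<in>states. \<tau> w \<in> states) \<and>
     (\<forall>(I::nat set) (c::nat \<Rightarrow> real) ws.
        finite I \<longrightarrow> (\<forall>k\<in>I. c k \<ge> 0 \<and> ws k \<in> states) \<longrightarrow> sum c I = 1 \<longrightarrow>
        \<tau> (\<lambda>f. \<Sum>k\<in>I. complex_of_real (c k) * ws k f) =
          (\<lambda>f. \<Sum>k\<in>I. complex_of_real (c k) * \<tau> (ws k) f)) \<and>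
     (\<forall>F w. eventually (\<lambda>v. v \<in> states) F \<longrightarrow> w \<in> states \<longrightarrow> weakly_converges F w \<longrightarrow>
        weakly_converges (filtermap \<tau> F) (\<tau> w))"

definition tensor :: "('a \<Rightarrow> complex) \<Rightarrow> ('b \<Rightarrow> complex) \<Rightarrow> ('a \<times> 'b \<Rightarrow> complex)" where
  "tensor fA fB = (\<lambda>(xA, xB). fA xA * fB xB)"

end

theory Submission
  imports Defs
begin

definition lingraph :: "('v::real_vector \<Rightarrow> real) \<Rightarrow> ('v \<times> real) set \<Rightarrow> bool" where
  "lingraph p G \<longleftrightarrow> (0,0) \<in> G \<and> (\<forall>x a y b. (x,a) \<in> G \<longrightarrow> (y,b) \<in> G \<longrightarrow> (x+y,a+b) \<in> G) \<and>
     (\<forall>x a c. (x,a) \<in> G \<longrightarrow> (c *\<^sub>R x, c*a) \<in> G) \<and> (\<forall>x a. (x,a) \<in> G \<longrightarrow> a \<le> p x)"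

lemma lg_0: "lingraph p G \<Longrightarrow> (0,0) \<in> G" unfolding lingraph_def by blast
lemma lg_add: "lingraph p G \<Longrightarrow> (x,a) \<in> G \<Longrightarrow> (y,b) \<in> G \<Longrightarrow> (x+y,a+b) \<in> G"
  unfolding lingraph_def by blast
lemma lg_scale: "lingraph p G \<Longrightarrow> (x,a) \<in> G \<Longrightarrow> (c *\<^sub>R x, c*a) \<in> G"
  unfolding lingraph_def by blast
lemma lg_dom: "lingraph p G \<Longrightarrow> (x,a) \<in> G \<Longrightarrow> a \<le> p x"
  unfolding lingraph_def by blast
lemma lingraphI: "(0,0) \<in> G \<Longrightarrow> (\<And>x a y b. (x,a) \<in> G \<Longrightarrow> (y,b) \<in> G \<Longrightarrow> (x+y,a+b) \<in> G) \<Longrightarrow>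
  (\<And>x a c. (x,a) \<in> G \<Longrightarrow> (c *\<^sub>R x, c*a) \<in> G) \<Longrightarrow> (\<And>x a. (x,a) \<in> G \<Longrightarrow> a \<le> p x) \<Longrightarrow> lingraph p G"
  unfolding lingraph_def by blast

locale sublin =
  fixes p :: "'v::real_vector \<Rightarrow> real"
  assumes padd: "p (x + y) \<le> p x + p y"
    and pscale: "c \<ge> 0 \<Longrightarrow> p (c *\<^sub>R x) = c * p x"
begin

lemma p0: "p 0 = 0"
  using pscale[of 0 0] by simp

lemma lingraph_fun:
  assumes "lingraph p G" "(x,a) \<in> G" "(x,b) \<in> G" shows "a = b"
proof -
  have "((-1) *\<^sub>R x, (-1)*b) \<in> G" using assms(1,3) by (rule lg_scale)
  then have "(x + (-1) *\<^sub>R x, a + (-1)*b) \<in> G" using assms(1,2) lg_add by blast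
  then have "a - b \<le> p 0" using assms(1) lg_dom by fastforce
  then have "a - b \<le> 0" using p0 by simp
  have "((-1) *\<^sub>R x, (-1)*a) \<in> G" using assms(1,2) by (rule lg_scale)
  then have "(x + (-1) *\<^sub>R x, b + (-1)*a) \<in> G" using assms(1,3) lg_add by blast
  then have "b - a \<le> p 0" using assms(1) lg_dom by fastforce
  then have "b - a \<le> 0" using p0 by simp
  with \<open>a - b \<le> 0\<close> show ?thesis by simp
qed

lemma extend_step:
  assumes G: "lingraph p G" and x0: "\<forall>a. (x0, a) \<notin> G"
  shows "\<exists>G'. lingraph p G' \<and> G \<subseteq> G' \<and> G' \<noteq> G"
proof -
  define T where "T = {b - p (y - x0) | y b. (y,b) \<in> G}"
  have Tne: "T \<noteq> {}" using lg_0[OF G] unfolding T_def by blast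
  have key: "b - p (y - x0) \<le> p (z + x0) - b'" if "(y,b) \<in> G" "(z,b') \<in> G" for y b z b'
  proof -
    have "(y+z, b+b') \<in> G" using lg_add[OF G that] .
    then have "b + b' \<le> p (y+z)" using lg_dom[OF G] by blast
    also have "p (y+z) = p ((y - x0) + (z + x0))" by (simp add: algebra_simps)
    also have "\<dots> \<le> p (y - x0) + p (z + x0)" by (rule padd)
    finally show ?thesis by simp
  qed
  have Tbdd: "bdd_above T"
    unfolding bdd_above_def T_def using key[of _ _ 0 0] lg_0[OF G] by fastforce
  define c where "c = Sup T"
  have c1: "b - p (y - x0) \<le> c" if "(y,b) \<in> G" for y b
    unfolding c_def by (rule cSup_upper) (use that Tbdd T_def in auto)
  have c2: "c \<le> p (z + x0) - b'" if "(z,b') \<in> G" for z b'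
    unfolding c_def by (rule cSup_least) (use Tne key that T_def in auto)
  define G' where "G' = {(y + t *\<^sub>R x0, b + t * c) | y b t. (y,b) \<in> G}"
  have dom: "b + t * c \<le> p (y + t *\<^sub>R x0)" if yb: "(y,b) \<in> G" for y b t
  proof (cases "t > 0")
    case True
    have "((1/t) *\<^sub>R y, (1/t) * b) \<in> G" using lg_scale[OF G yb] .
    from c2[OF this] have "c \<le> p ((1/t) *\<^sub>R y + x0) - (1/t) * b" .
    then have "t * c \<le> t * (p ((1/t) *\<^sub>R y + x0) - (1/t) * b)"
      using True by (simp add: mult_left_mono)
    also have "\<dots> = t * p ((1/t) *\<^sub>R y + x0) - b" using True by (simp add: right_diff_distrib)
    finally have "t * c \<le> t * p ((1/t) *\<^sub>R y + x0) - b" .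
    also have "t * p ((1/t) *\<^sub>R y + x0) = p (t *\<^sub>R ((1/t) *\<^sub>R y + x0))"
      using pscale[of t] True by simp
    also have "t *\<^sub>R ((1/t) *\<^sub>R y + x0) = y + t *\<^sub>R x0" using True by (simp add: algebra_simps)
    finally show ?thesis by simp
  next
    case False
    show ?thesis
    proof (cases "t = 0")
      case True then show ?thesis using lg_dom[OF G yb] by auto
    next
      case False
      with \<open>\<not> t > 0\<close> have s: "-t > 0" by simp
      have "((1/(-t)) *\<^sub>R y, (1/(-t)) * b) \<in> G" using lg_scale[OF G yb] .
      from c1[OF this] have "(1/(-t)) * b - p ((1/(-t)) *\<^sub>R y - x0) \<le> c" .
      then have "(-t) * ((1/(-t)) * b - p ((1/(-t)) *\<^sub>R y - x0)) \<le> (-t) * c"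
        using s by (simp add: mult_left_mono)
      then have "b - (-t) * p ((1/(-t)) *\<^sub>R y - x0) \<le> (-t) * c"
        using s by (simp add: algebra_simps)
      also have "(-t) * p ((1/(-t)) *\<^sub>R y - x0) = p ((-t) *\<^sub>R ((1/(-t)) *\<^sub>R y - x0))"
        using pscale[of "-t"] s by simp
      also have "(-t) *\<^sub>R ((1/(-t)) *\<^sub>R y - x0) = y + t *\<^sub>R x0" using s by (simp add: algebra_simps)
      finally show ?thesis by (simp add: algebra_simps)
    qed
  qed
  have "lingraph p G'"
  proof (rule lingraphI)
    show "(0,0) \<in> G'" unfolding G'_def using lg_0[OF G] by force
  next
    fix x a y b assume "(x,a) \<in> G'" "(y,b) \<in> G'"
    then obtain x1 a1 t1 x2 a2 t2 where h: "(x1,a1) \<in> G" "(x2,a2) \<in> G"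
      "x = x1 + t1 *\<^sub>R x0" "a = a1 + t1 * c" "y = x2 + t2 *\<^sub>R x0" "b = a2 + t2 * c"
      unfolding G'_def by blast
    have "(x1+x2, a1+a2) \<in> G" using lg_add[OF G h(1,2)] .
    moreover have "x + y = (x1+x2) + (t1+t2) *\<^sub>R x0" "a + b = (a1+a2) + (t1+t2) * c"
      using h by (simp_all add: algebra_simps)
    ultimately show "(x+y, a+b) \<in> G'" unfolding G'_def by blast
  next
    fix x a d assume "(x,a) \<in> G'"
    then obtain x1 a1 t1 where h: "(x1,a1) \<in> G" "x = x1 + t1 *\<^sub>R x0" "a = a1 + t1 * c"
      unfolding G'_def by blast
    have "(d *\<^sub>R x1, d*a1) \<in> G" using lg_scale[OF G h(1)] .
    moreover have "d *\<^sub>R x = d *\<^sub>R x1 + (d*t1) *\<^sub>R x0" "d * a = d*a1 + (d*t1) * c"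
      using h by (simp_all add: algebra_simps)
    ultimately show "(d *\<^sub>R x, d*a) \<in> G'" unfolding G'_def by blast
  next
    fix x a assume "(x,a) \<in> G'"
    then show "a \<le> p x" unfolding G'_def using dom by blast
  qed
  moreover have "G \<subseteq> G'"
  proof
    fix z assume "z \<in> G" then obtain y b where "z = (y,b)" "(y,b) \<in> G" by (cases z) auto
    then show "z \<in> G'" unfolding G'_def by force
  qed
  moreover have "(x0, c) \<in> G'"
    unfolding G'_def using lg_0[OF G] by force
  moreover have "G' \<noteq> G" using \<open>(x0, c) \<in> G'\<close> x0 by metis
  ultimately show ?thesis by (intro exI[of _ G']) simp
qed

theorem hahn_banach:
  assumes G0: "lingraph p G0"
  shows "\<exists>L. (\<forall>x y. L (x + y) = L x + L y) \<and> (\<forall>c x. L (c *\<^sub>R x) = c * L x) \<and>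
     (\<forall>x. L x \<le> p x) \<and> (\<forall>x a. (x,a) \<in> G0 \<longrightarrow> L x = a)"
proof -
  define A where "A = {G. lingraph p G \<and> G0 \<subseteq> G}"
  have "\<exists>M\<in>A. \<forall>X\<in>A. M \<subseteq> X \<longrightarrow> X = M"
  proof (rule Zorn_Lemma2, intro ballI)
    fix C assume C: "C \<in> chains A"
    show "\<exists>U\<in>A. \<forall>X\<in>C. X \<subseteq> U"
    proof (cases "C = {}")
      case True then show ?thesis using G0 A_def by auto
    next
      case False
      have CA: "C \<subseteq> A" and ch: "\<And>X Y. X \<in> C \<Longrightarrow> Y \<in> C \<Longrightarrow> X \<subseteq> Y \<or> Y \<subseteq> X"
        using C unfolding chains_def chain_subset_def by auto
      have CL: "\<And>X. X \<in> C \<Longrightarrow> lingraph p X" using CA unfolding A_def by blast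
      have "lingraph p (\<Union>C)"
      proof (rule lingraphI)
        show "(0,0) \<in> \<Union>C" using False CL lg_0 by blast
      next
        fix x a y b assume "(x,a) \<in> \<Union>C" "(y,b) \<in> \<Union>C"
        then obtain X Y where "X \<in> C" "Y \<in> C" "(x,a) \<in> X" "(y,b) \<in> Y" by blast
        then show "(x+y,a+b) \<in> \<Union>C" using ch[of X Y] CL lg_add
          by (metis UnionI subsetD)
      next
        fix x a c assume "(x,a) \<in> \<Union>C"
        then show "(c *\<^sub>R x, c*a) \<in> \<Union>C" using CL lg_scale by blast
      next
        fix x a assume "(x,a) \<in> \<Union>C"
        then show "a \<le> p x" using CL lg_dom by blast
      qed
      moreover have "G0 \<subseteq> \<Union>C"
      proof -
        obtain X where "X \<in> C" using False by blast
        then have "G0 \<subseteq> X" using CA unfolding A_def by blast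
        then show ?thesis using \<open>X \<in> C\<close> by blast
      qed
      ultimately have "\<Union>C \<in> A" unfolding A_def by simp
      then show ?thesis by (intro bexI[of _ "\<Union>C"]) auto
    qed
  qed
  then obtain M where MA: "M \<in> A" and max0: "\<forall>X\<in>A. M \<subseteq> X \<longrightarrow> X = M" by (elim bexE)
  have M: "lingraph p M" "G0 \<subseteq> M" using MA unfolding A_def by auto
  have tot: "\<exists>a. (x,a) \<in> M" for x
  proof (rule ccontr)
    assume "\<nexists>a. (x, a) \<in> M"
    then have "\<forall>a. (x, a) \<notin> M" by simp
    from extend_step[OF M(1) this] obtain G' where G': "lingraph p G'" "M \<subseteq> G'" "G' \<noteq> M"
      by (elim exE conjE)
    have "G' \<in> A" using G' M(2) unfolding A_def by auto
    then have "G' = M" using max0 G'(2) by auto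
    then show False using G'(3) by simp
  qed
  define L where "L x = (SOME a. (x,a) \<in> M)" for x
  have LM: "(x, L x) \<in> M" for x unfolding L_def using tot by (metis someI_ex)
  have Leq: "L x = a" if "(x,a) \<in> M" for x a using lingraph_fun[OF M(1) LM that] .
  show ?thesis
  proof (intro exI[of _ L] conjI allI impI)
    fix x y show "L (x + y) = L x + L y"
      using lg_add[OF M(1) LM[of x] LM[of y]] Leq by blast
  next
    fix c x show "L (c *\<^sub>R x) = c * L x"
      using lg_scale[OF M(1) LM[of x]] Leq by blast
  next
    fix x show "L x \<le> p x" using lg_dom[OF M(1) LM] by blast
  next
    fix x a assume "(x,a) \<in> G0" then show "L x = a" using Leq M(2) by blast
  qed
qed

end

lemma Cb_bcontfun: "Cb = bcontfun"
  by (simp add: Cb_def bcontfun_def)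

lemma CbI: "continuous_on UNIV f \<Longrightarrow> bounded (range f) \<Longrightarrow> f \<in> Cb"
  by (simp add: Cb_def)

lemma CbD: "f \<in> Cb \<Longrightarrow> continuous_on UNIV f" "f \<in> Cb \<Longrightarrow> bounded (range f)"
  by (simp_all add: Cb_def)

lemma Cb_normI: "continuous_on UNIV f \<Longrightarrow> (\<And>x. norm (f x) \<le> B) \<Longrightarrow> f \<in> Cb"
  unfolding Cb_bcontfun by (rule bcontfun_normI)

lemma Cb_bound: "f \<in> Cb \<Longrightarrow> \<exists>B. \<forall>x. norm (f x) \<le> B"
  unfolding Cb_def by (auto simp: bounded_iff)

lemma Cb_add: "f \<in> Cb \<Longrightarrow> g \<in> Cb \<Longrightarrow> (\<lambda>x. f x + g x) \<in> Cb"
  unfolding Cb_bcontfun by (rule plus_cont)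

lemma Cb_mult: "f \<in> Cb \<Longrightarrow> g \<in> Cb \<Longrightarrow> (\<lambda>x. f x * g x) \<in> (Cb :: ('a::topological_space \<Rightarrow> complex) set)"
proof -
  assume f: "f \<in> Cb" and g: "g \<in> Cb"
  obtain B1 where B1: "\<And>x. norm (f x) \<le> B1" using Cb_bound[OF f] by blast
  obtain B2 where B2: "\<And>x. norm (g x) \<le> B2" using Cb_bound[OF g] by blast
  show ?thesis
  proof (rule Cb_normI)
    show "continuous_on UNIV (\<lambda>x. f x * g x)" using CbD(1)[OF f] CbD(1)[OF g]
      by (intro continuous_intros)
    fix x show "norm (f x * g x) \<le> B1 * B2"
      unfolding norm_mult by (rule mult_mono) (use B1 B2 norm_ge_zero order_trans in blast)+
  qed
qed

lemma Cb_const: "(\<lambda>x. c) \<in> Cb"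
  by (rule Cb_normI[of _ "norm c"]) (auto intro: continuous_intros)

lemma Cb_cmult: "f \<in> Cb \<Longrightarrow> (\<lambda>x. c * f x) \<in> (Cb :: ('a::topological_space \<Rightarrow> complex) set)"
  using Cb_mult[OF Cb_const] by blast

lemma Cb_of_real: "continuous_on UNIV g \<Longrightarrow> (\<And>x. \<bar>g x\<bar> \<le> B) \<Longrightarrow>
    (\<lambda>x. complex_of_real (g x)) \<in> Cb"
  by (rule Cb_normI[of _ B]) (auto intro: continuous_intros)

lemma Cb_Re: "f \<in> Cb \<Longrightarrow> continuous_on UNIV (\<lambda>x. Re (f x))"
  using CbD(1) by (intro continuous_intros) auto
lemma Cb_Im: "f \<in> Cb \<Longrightarrow> continuous_on UNIV (\<lambda>x. Im (f x))"
  using CbD(1) by (intro continuous_intros) auto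

lemma st_add: "is_state w \<Longrightarrow> f \<in> Cb \<Longrightarrow> g \<in> Cb \<Longrightarrow> w (\<lambda>x. f x + g x) = w f + w g"
  unfolding is_state_def by blast
lemma st_scale: "is_state w \<Longrightarrow> f \<in> Cb \<Longrightarrow> w (\<lambda>x. c * f x) = c * w f"
  unfolding is_state_def by blast
lemma st_pos: "is_state w \<Longrightarrow> f \<in> Cb \<Longrightarrow> Im (w (\<lambda>x. cnj (f x) * f x)) = 0 \<and> Re (w (\<lambda>x. cnj (f x) * f x)) \<ge> 0"
  unfolding is_state_def by blast
lemma st_one: "is_state w \<Longrightarrow> w (\<lambda>x. 1) = 1"
  unfolding is_state_def by blast
lemma st_out: "is_state w \<Longrightarrow> f \<notin> Cb \<Longrightarrow> w f = 0"
  unfolding is_state_def by blast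

lemma st_const: "is_state w \<Longrightarrow> w (\<lambda>x. c) = c"
  using st_scale[of w "\<lambda>x. 1" c] st_one[of w] Cb_const[of 1] by simp

lemma st_minus: "is_state w \<Longrightarrow> f \<in> Cb \<Longrightarrow> g \<in> Cb \<Longrightarrow> w (\<lambda>x. f x - g x) = w f - w g"
proof -
  assume w: "is_state w" and f: "f \<in> Cb" and g: "g \<in> Cb"
  have "w (\<lambda>x. f x + (-1) * g x) = w f + w (\<lambda>x. (-1) * g x)"
    by (rule st_add[OF w f Cb_cmult[OF g]])
  also have "w (\<lambda>x. (-1) * g x) = - w g" using st_scale[OF w g, of "-1"] by simp
  finally show ?thesis by simp
qed

lemma st_nonneg:
  assumes w: "is_state w" and g: "continuous_on UNIV g" "\<And>x. \<bar>g x\<bar> \<le> B" "\<And>x. g x \<ge> 0"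
  shows "Im (w (\<lambda>x. complex_of_real (g x))) = 0 \<and> Re (w (\<lambda>x. complex_of_real (g x))) \<ge> 0"
proof -
  define h where "h x = complex_of_real (sqrt (g x))" for x
  have "h \<in> Cb"
  proof (rule Cb_normI[of _ "sqrt B"])
    show "continuous_on UNIV h" unfolding h_def using g(1) by (intro continuous_intros)
    fix x have "sqrt (g x) \<le> sqrt B" using g(2)[of x] g(3)[of x] by (simp add: real_sqrt_le_mono)
    then show "norm (h x) \<le> sqrt B" unfolding h_def using g(3)[of x] by simp
  qed
  moreover have "(\<lambda>x. cnj (h x) * h x) = (\<lambda>x. complex_of_real (g x))"
    unfolding h_def using g(3) by (auto simp flip: of_real_mult)
  ultimately show ?thesis using st_pos[OF w] by metis
qed

lemma st_real_le:
  assumes w: "is_state w" and g: "continuous_on UNIV g" "\<And>x. \<bar>g x\<bar> \<le> B" "\<And>x. g x \<le> M"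
  shows "Im (w (\<lambda>x. complex_of_real (g x))) = 0 \<and> Re (w (\<lambda>x. complex_of_real (g x))) \<le> M"
proof -
  have gC: "(\<lambda>x. complex_of_real (g x)) \<in> Cb" by (rule Cb_of_real[OF g(1,2)])
  have "Im (w (\<lambda>x. complex_of_real (M - g x))) = 0 \<and> Re (w (\<lambda>x. complex_of_real (M - g x))) \<ge> 0"
  proof (rule st_nonneg[OF w, of _ "\<bar>M\<bar> + B"])
    show "continuous_on UNIV (\<lambda>x. M - g x)" using g(1) by (intro continuous_intros)
    fix x show "\<bar>M - g x\<bar> \<le> \<bar>M\<bar> + B" using g(2)[of x] by linarith
    show "M - g x \<ge> 0" using g(3)[of x] by simp
  qed
  moreover have "w (\<lambda>x. complex_of_real (M - g x)) = of_real M - w (\<lambda>x. complex_of_real (g x))"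
    using st_minus[OF w Cb_const[of "complex_of_real M"] gC] st_const[OF w] by simp
  ultimately show ?thesis by simp
qed

lemma st_real_abs:
  assumes w: "is_state w" and g: "continuous_on UNIV g" "\<And>x. \<bar>g x\<bar> \<le> B"
  shows "Im (w (\<lambda>x. complex_of_real (g x))) = 0 \<and> \<bar>Re (w (\<lambda>x. complex_of_real (g x)))\<bar> \<le> B"
proof -
  have gC: "(\<lambda>x. complex_of_real (g x)) \<in> Cb" by (rule Cb_of_real[OF g(1,2)])
  have 1: "Im (w (\<lambda>x. complex_of_real (g x))) = 0 \<and> Re (w (\<lambda>x. complex_of_real (g x))) \<le> B"
    by (rule st_real_le[OF w g(1,2)]) (use g(2) abs_le_D1 in blast)
  have 2: "Re (w (\<lambda>x. complex_of_real (- g x))) \<le> B"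
  proof -
    have "\<And>x. - g x \<le> B" "\<And>x. \<bar>- g x\<bar> \<le> B" using g(2) abs_le_D2 by auto
    moreover have "continuous_on UNIV (\<lambda>x. - g x)" using g(1) by (intro continuous_intros)
    ultimately show ?thesis using st_real_le[OF w, of "\<lambda>x. - g x" B B] by simp
  qed
  have "w (\<lambda>x. complex_of_real (- g x)) = - w (\<lambda>x. complex_of_real (g x))"
    using st_scale[OF w gC, of "-1"] by simp
  with 1 2 show ?thesis by auto
qed

lemma st_decomp:
  assumes w: "is_state w" and f: "f \<in> Cb"
  shows "w f = w (\<lambda>x. complex_of_real (Re (f x))) + \<i> * w (\<lambda>x. complex_of_real (Im (f x)))"
proof -
  obtain B where B: "\<And>x. norm (f x) \<le> B" using Cb_bound[OF f] by blast
  have re: "(\<lambda>x. complex_of_real (Re (f x))) \<in> Cb"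
    by (rule Cb_of_real[OF Cb_Re[OF f], of B]) (use B abs_Re_le_cmod order_trans in blast)
  have im: "(\<lambda>x. complex_of_real (Im (f x))) \<in> Cb"
    by (rule Cb_of_real[OF Cb_Im[OF f], of B]) (use B abs_Im_le_cmod order_trans in blast)
  have "f = (\<lambda>x. complex_of_real (Re (f x)) + \<i> * complex_of_real (Im (f x)))"
    by (auto simp: complex_eq_iff)
  then have "w f = w (\<lambda>x. complex_of_real (Re (f x)) + \<i> * complex_of_real (Im (f x)))" by simp
  also have "\<dots> = w (\<lambda>x. complex_of_real (Re (f x))) + w (\<lambda>x. \<i> * complex_of_real (Im (f x)))"
    by (rule st_add[OF w re Cb_cmult[OF im]])
  also have "w (\<lambda>x. \<i> * complex_of_real (Im (f x))) = \<i> * w (\<lambda>x. complex_of_real (Im (f x)))"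
    by (rule st_scale[OF w im])
  finally show ?thesis .
qed

lemma st_bound:
  assumes w: "is_state w" and f: "\<And>x. norm (f x) \<le> B"
  shows "norm (w f) \<le> 2 * B"
proof (cases "f \<in> Cb")
  case False
  have "0 \<le> B" using f[of undefined] norm_ge_zero order_trans by blast
  then show ?thesis using st_out[OF w False] by simp
next
  case True
  have a: "\<bar>Re (f x)\<bar> \<le> B" "\<bar>Im (f x)\<bar> \<le> B" for x
    using f[of x] abs_Re_le_cmod abs_Im_le_cmod order_trans by blast+
  have 1: "Im (w (\<lambda>x. complex_of_real (Re (f x)))) = 0 \<and> \<bar>Re (w (\<lambda>x. complex_of_real (Re (f x))))\<bar> \<le> B"
    by (rule st_real_abs[OF w Cb_Re[OF True]]) (rule a)
  have 2: "Im (w (\<lambda>x. complex_of_real (Im (f x)))) = 0 \<and> \<bar>Re (w (\<lambda>x. complex_of_real (Im (f x))))\<bar> \<le> B"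
    by (rule st_real_abs[OF w Cb_Im[OF True]]) (rule a)
  have "norm (w f) \<le> norm (w (\<lambda>x. complex_of_real (Re (f x)))) + norm (\<i> * w (\<lambda>x. complex_of_real (Im (f x))))"
    unfolding st_decomp[OF w True] by (rule norm_triangle_ineq)
  also have "norm (w (\<lambda>x. complex_of_real (Re (f x)))) = \<bar>Re (w (\<lambda>x. complex_of_real (Re (f x))))\<bar>"
    using 1 by (simp add: cmod_eq_Re)
  also have "norm (\<i> * w (\<lambda>x. complex_of_real (Im (f x)))) = \<bar>Re (w (\<lambda>x. complex_of_real (Im (f x))))\<bar>"
    using 2 by (simp add: norm_mult cmod_eq_Re)
  finally show ?thesis using 1 2 by linarith
qed

lemma Cb_comp: "f \<in> Cb \<Longrightarrow> continuous_on UNIV g \<Longrightarrow> (\<lambda>z. f (g z)) \<in> Cb"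
proof -
  assume f: "f \<in> Cb" and g: "continuous_on UNIV g"
  obtain B where B: "\<And>x. norm (f x) \<le> B" using Cb_bound[OF f] by blast
  show ?thesis
  proof (rule Cb_normI[of _ B])
    show "continuous_on UNIV (\<lambda>z. f (g z))"
      using continuous_on_compose2[OF CbD(1)[OF f] g] by simp
  qed (rule B)
qed

lemma Cb_cnj: "f \<in> Cb \<Longrightarrow> (\<lambda>x. cnj (f x)) \<in> Cb"
proof -
  assume f: "f \<in> Cb"
  obtain B where B: "\<And>x. norm (f x) \<le> B" using Cb_bound[OF f] by blast
  show ?thesis by (rule Cb_normI[of _ B]) (use CbD(1)[OF f] B in \<open>auto intro: continuous_intros\<close>)
qed

lemma tensor_1B: "tensor (\<lambda>_. 1) fB = (\<lambda>z. fB (snd z))"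
  by (auto simp: tensor_def)
lemma tensor_A1: "tensor fA (\<lambda>_. 1) = (\<lambda>z. fA (fst z))"
  by (auto simp: tensor_def)

lemma Cb_tensor_1B: "fB \<in> Cb \<Longrightarrow> tensor (\<lambda>_. 1) fB \<in> (Cb :: ('a::topological_space \<times> 'b::topological_space \<Rightarrow> complex) set)"
  unfolding tensor_1B by (rule Cb_comp) (auto intro: continuous_intros)
lemma Cb_tensor_A1: "fA \<in> Cb \<Longrightarrow> tensor fA (\<lambda>_. 1) \<in> (Cb :: ('a::topological_space \<times> 'b::topological_space \<Rightarrow> complex) set)"
  unfolding tensor_A1 by (rule Cb_comp) (auto intro: continuous_intros)

lemma statesI: "is_state w \<Longrightarrow> w \<in> states" and statesD: "w \<in> states \<Longrightarrow> is_state w"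
  by (simp_all add: states_def)

lemma is_stateI:
  assumes "\<And>f g. f \<in> Cb \<Longrightarrow> g \<in> Cb \<Longrightarrow> w (\<lambda>x. f x + g x) = w f + w g"
    "\<And>c f. f \<in> Cb \<Longrightarrow> w (\<lambda>x. c * f x) = c * w f"
    "\<And>f. f \<in> Cb \<Longrightarrow> Im (w (\<lambda>x. cnj (f x) * f x)) = 0"
    "\<And>f. f \<in> Cb \<Longrightarrow> Re (w (\<lambda>x. cnj (f x) * f x)) \<ge> 0"
    "w (\<lambda>x. 1) = 1" "\<And>f. f \<notin> Cb \<Longrightarrow> w f = 0"
  shows "is_state w"
  unfolding is_state_def using assms by blast

definition margB :: "(('a::topological_space \<times> 'b::topological_space \<Rightarrow> complex) \<Rightarrow> complex) \<Rightarrow> ('b \<Rightarrow> complex) \<Rightarrow> complex" where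
  "margB u = (\<lambda>fB. if fB \<in> Cb then u (tensor (\<lambda>_. 1) fB) else 0)"

lemma margB_state:
  assumes u: "is_state u" shows "is_state (margB u)"
proof (rule is_stateI)
  fix f g :: "'b \<Rightarrow> complex" assume f: "f \<in> Cb" and g: "g \<in> Cb"
  then show "margB u (\<lambda>x. f x + g x) = margB u f + margB u g"
    using st_add[OF u Cb_tensor_1B[OF f] Cb_tensor_1B[OF g]] Cb_add[OF f g]
    unfolding margB_def tensor_1B by simp
next
  fix c and f :: "'b \<Rightarrow> complex" assume f: "f \<in> Cb"
  then show "margB u (\<lambda>x. c * f x) = c * margB u f"
    using st_scale[OF u Cb_tensor_1B[OF f]] Cb_cmult[OF f]
    unfolding margB_def tensor_1B by simp
next
  fix f :: "'b \<Rightarrow> complex" assume f: "f \<in> Cb"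
  have "(\<lambda>x. cnj (f x) * f x) \<in> Cb" by (rule Cb_mult[OF Cb_cnj[OF f] f])
  then show "Im (margB u (\<lambda>x. cnj (f x) * f x)) = 0" "Re (margB u (\<lambda>x. cnj (f x) * f x)) \<ge> 0"
    using st_pos[OF u Cb_tensor_1B[OF f]] unfolding margB_def tensor_1B by simp_all
next
  show "margB u (\<lambda>x. 1) = 1" using st_one[OF u] Cb_const[of 1] unfolding margB_def tensor_1B by simp
next
  fix f :: "'b \<Rightarrow> complex" assume "f \<notin> Cb" then show "margB u f = 0" unfolding margB_def by simp
qed

definition pt :: "'a::topological_space \<Rightarrow> ('a \<Rightarrow> complex) \<Rightarrow> complex" where
  "pt x0 = (\<lambda>f. if f \<in> Cb then f x0 else 0)"

lemma pt_state: "is_state (pt x0)"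
proof (rule is_stateI)
  fix f g :: "'a \<Rightarrow> complex" assume f: "f \<in> Cb" and g: "g \<in> Cb"
  then show "pt x0 (\<lambda>x. f x + g x) = pt x0 f + pt x0 g" using Cb_add[OF f g] by (simp add: pt_def)
next
  fix c and f :: "'a \<Rightarrow> complex" assume f: "f \<in> Cb"
  then show "pt x0 (\<lambda>x. c * f x) = c * pt x0 f" using Cb_cmult[OF f] by (simp add: pt_def)
next
  fix f :: "'a \<Rightarrow> complex" assume f: "f \<in> Cb"
  have c: "cnj (f x0) * f x0 = complex_of_real ((cmod (f x0))^2)" by (metis complex_norm_square mult.commute of_real_power)
  show "Im (pt x0 (\<lambda>x. cnj (f x) * f x)) = 0" "Re (pt x0 (\<lambda>x. cnj (f x) * f x)) \<ge> 0"
    unfolding pt_def using c by auto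
next
  show "pt x0 (\<lambda>x. 1) = 1" using Cb_const[of 1] by (simp add: pt_def)
next
  fix f :: "'a \<Rightarrow> complex" assume "f \<notin> Cb" then show "pt x0 f = 0" by (simp add: pt_def)
qed

lemma st_convex:
  fixes ws :: "nat \<Rightarrow> ('a::topological_space \<Rightarrow> complex) \<Rightarrow> complex"
  assumes I: "finite I" and c: "\<And>k. k \<in> I \<Longrightarrow> c k \<ge> 0" and ws: "\<And>k. k \<in> I \<Longrightarrow> is_state (ws k)"
    and s: "sum c I = 1"
  shows "is_state (\<lambda>f. \<Sum>k\<in>I. complex_of_real (c k) * ws k f)"
proof (rule is_stateI)
  fix f g :: "'a \<Rightarrow> complex" assume f: "f \<in> Cb" and g: "g \<in> Cb"
  show "(\<Sum>k\<in>I. complex_of_real (c k) * ws k (\<lambda>x. f x + g x)) =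
     (\<Sum>k\<in>I. complex_of_real (c k) * ws k f) + (\<Sum>k\<in>I. complex_of_real (c k) * ws k g)"
    by (simp add: st_add[OF ws f g] distrib_left sum.distrib)
next
  fix d and f :: "'a \<Rightarrow> complex" assume f: "f \<in> Cb"
  show "(\<Sum>k\<in>I. complex_of_real (c k) * ws k (\<lambda>x. d * f x)) = d * (\<Sum>k\<in>I. complex_of_real (c k) * ws k f)"
    by (simp add: st_scale[OF ws f] sum_distrib_left mult_ac)
next
  fix f :: "'a \<Rightarrow> complex" assume f: "f \<in> Cb"
  show "Im (\<Sum>k\<in>I. complex_of_real (c k) * ws k (\<lambda>x. cnj (f x) * f x)) = 0"
    using st_pos[OF ws f] by (simp add: Im_sum)
  show "Re (\<Sum>k\<in>I. complex_of_real (c k) * ws k (\<lambda>x. cnj (f x) * f x)) \<ge> 0"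
    using st_pos[OF ws f] c by (simp add: Re_sum sum_nonneg)
next
  show "(\<Sum>k\<in>I. complex_of_real (c k) * ws k (\<lambda>x. 1)) = 1"
    using st_one[OF ws] s by (simp flip: of_real_sum)
next
  fix f :: "'a \<Rightarrow> complex" assume "f \<notin> Cb"
  then show "(\<Sum>k\<in>I. complex_of_real (c k) * ws k f) = 0" using st_out[OF ws] by simp
qed

definition bnd :: "('a::topological_space \<Rightarrow> complex) \<Rightarrow> real" where
  "bnd f = (if f \<in> Cb then 2 * (SUP x. norm (f x)) else 0)"

lemma st_bnd: "is_state w \<Longrightarrow> norm (w f) \<le> bnd f"
proof (cases "f \<in> Cb")
  case True
  assume w: "is_state w"
  obtain B where B: "\<And>x. norm (f x) \<le> B" using Cb_bound[OF True] by blast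
  have "norm (f x) \<le> (SUP x. norm (f x))" for x
    by (rule cSUP_upper) (use B in \<open>auto simp: bdd_above_def\<close>)
  from st_bound[OF w this] show ?thesis using True by (simp add: bnd_def)
next
  case False
  assume w: "is_state w" then show ?thesis using False st_out[OF w False] by (simp add: bnd_def)
qed

lemma states_closed: "closed (states :: (('a::topological_space \<Rightarrow> complex) \<Rightarrow> complex) set)"
proof -
  have eq: "(states :: (('a \<Rightarrow> complex) \<Rightarrow> complex) set) =
    (\<Inter>f\<in>Cb. \<Inter>g\<in>Cb. {w. w (\<lambda>x. f x + g x) = w f + w g}) \<inter>
    (\<Inter>c. \<Inter>f\<in>Cb. {w. w (\<lambda>x. c * f x) = c * w f}) \<inter>
    (\<Inter>f\<in>Cb. {w. Im (w (\<lambda>x. cnj (f x) * f x)) = 0} \<inter> {w. 0 \<le> Re (w (\<lambda>x. cnj (f x) * f x))}) \<inter>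
    {w. w (\<lambda>x. 1) = 1} \<inter> (\<Inter>f\<in>-Cb. {w. w f = 0})"
    unfolding states_def is_state_def by auto
  show ?thesis unfolding eq
    by (intro closed_INT closed_Int closed_Collect_eq closed_Collect_le ballI allI
        continuous_intros continuous_on_product_coordinates)
qed

lemma states_compact: "compact (states :: (('a::topological_space \<Rightarrow> complex) \<Rightarrow> complex) set)"
proof -
  let ?P = "Pi\<^sub>E UNIV (\<lambda>f::'a \<Rightarrow> complex. cball (0::complex) (bnd f))"
  have "compactin (product_topology (\<lambda>_. euclidean) UNIV) ?P"
    by (subst compactin_PiE) auto
  then have cP: "compact ?P" by (simp add: euclidean_product_topology)
  have "states \<subseteq> ?P" using st_bnd by (auto simp: states_def)
  then have "states = ?P \<inter> states" by blast
  then show ?thesis using compact_Int_closed[OF cP states_closed] by metis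
qed

definition rebc :: "('a::topological_space \<Rightarrow> complex) \<Rightarrow> 'a \<Rightarrow>\<^sub>C real" where
  "rebc f = Bcontfun (\<lambda>x. Re (f x))"
definition imbc :: "('a::topological_space \<Rightarrow> complex) \<Rightarrow> 'a \<Rightarrow>\<^sub>C real" where
  "imbc f = Bcontfun (\<lambda>x. Im (f x))"

lemma apply_rebc: "f \<in> Cb \<Longrightarrow> apply_bcontfun (rebc f) x = Re (f x)"
proof -
  assume f: "f \<in> Cb"
  obtain B where B: "\<And>x. norm (f x) \<le> B" using Cb_bound[OF f] by blast
  have "(\<lambda>x. Re (f x)) \<in> bcontfun"
  proof (rule bcontfun_normI[of _ B])
    show "continuous_on UNIV (\<lambda>x. Re (f x))" using Cb_Re[OF f] .
    fix x show "norm (Re (f x)) \<le> B" using abs_Re_le_cmod[of "f x"] B[of x] by simp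
  qed
  then show ?thesis unfolding rebc_def by (simp add: Bcontfun_inverse)
qed

lemma apply_imbc: "f \<in> Cb \<Longrightarrow> apply_bcontfun (imbc f) x = Im (f x)"
proof -
  assume f: "f \<in> Cb"
  obtain B where B: "\<And>x. norm (f x) \<le> B" using Cb_bound[OF f] by blast
  have "(\<lambda>x. Im (f x)) \<in> bcontfun"
  proof (rule bcontfun_normI[of _ B])
    show "continuous_on UNIV (\<lambda>x. Im (f x))" using Cb_Im[OF f] .
    fix x show "norm (Im (f x)) \<le> B" using abs_Im_le_cmod[of "f x"] B[of x] by simp
  qed
  then show ?thesis unfolding imbc_def by (simp add: Bcontfun_inverse)
qed

definition comb :: "('a::topological_space \<Rightarrow>\<^sub>C real) \<Rightarrow> ('b::topological_space \<Rightarrow>\<^sub>C real) \<Rightarrow> ('a \<times> 'b) \<Rightarrow>\<^sub>C real" where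
  "comb gA gB = Bcontfun (\<lambda>z. apply_bcontfun gA (fst z) + apply_bcontfun gB (snd z))"

lemma bc_abs: "\<bar>apply_bcontfun g x\<bar> \<le> norm g" for g :: "'a::topological_space \<Rightarrow>\<^sub>C real"
  using norm_bounded[of g x] by simp

lemma apply_comb: "apply_bcontfun (comb gA gB) z = apply_bcontfun gA (fst z) + apply_bcontfun gB (snd z)"
proof -
  have "(\<lambda>z. apply_bcontfun gA (fst z) + apply_bcontfun gB (snd z)) \<in> bcontfun"
  proof (rule bcontfun_normI[of _ "norm gA + norm gB"])
    show "continuous_on UNIV (\<lambda>z. apply_bcontfun gA (fst z) + apply_bcontfun gB (snd z))"
      by (intro continuous_intros continuous_on_compose2[OF continuous_on_apply_bcontfun]) auto
    fix z show "norm (apply_bcontfun gA (fst z) + apply_bcontfun gB (snd z)) \<le> norm gA + norm gB"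
      using bc_abs[of gA "fst z"] bc_abs[of gB "snd z"] by simp
  qed
  then show ?thesis unfolding comb_def by (simp add: Bcontfun_inverse)
qed

definition rf :: "('a::topological_space \<Rightarrow>\<^sub>C real) \<Rightarrow> 'a \<Rightarrow> complex" where
  "rf g = (\<lambda>x. complex_of_real (apply_bcontfun g x))"

lemma rf_Cb: "rf g \<in> Cb"
  unfolding rf_def by (rule Cb_of_real[of _ "norm g"]) (auto intro: continuous_intros bc_abs)

lemma rf_add: "rf (g + h) = (\<lambda>x. rf g x + rf h x)" by (simp add: rf_def)
lemma rf_scale: "rf (c *\<^sub>R g) = (\<lambda>x. complex_of_real c * rf g x)" by (simp add: rf_def)
lemma rf_zero: "rf 0 = (\<lambda>x. 0)" by (simp add: rf_def)

lemma st_rf_real: "is_state w \<Longrightarrow> Im (w (rf g)) = 0"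
  unfolding rf_def using st_real_abs[of w "apply_bcontfun g" "norm g"] bc_abs by auto

lemma st_rf_le: "is_state w \<Longrightarrow> Re (w (rf g)) \<le> (SUP x. apply_bcontfun g x)"
proof -
  assume w: "is_state w"
  have "apply_bcontfun g x \<le> (SUP x. apply_bcontfun g x)" for x
    by (rule cSUP_upper) (auto simp: bdd_above_def intro!: exI[of _ "norm g"] abs_le_D1[OF bc_abs])
  then show ?thesis unfolding rf_def using st_real_le[OF w, of "apply_bcontfun g" "norm g"] bc_abs by auto
qed

definition psup :: "('a::topological_space \<Rightarrow>\<^sub>C real) \<Rightarrow> real" where
  "psup g = (SUP x. apply_bcontfun g x)"

lemma psup_upper: "apply_bcontfun g x \<le> psup g"
  unfolding psup_def
  by (rule cSUP_upper) (auto simp: bdd_above_def intro!: exI[of _ "norm g"] abs_le_D1[OF bc_abs])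

lemma psup_least: "(\<And>x. apply_bcontfun g x \<le> M) \<Longrightarrow> psup g \<le> M"
  unfolding psup_def by (rule cSUP_least) auto

lemma sublin_psup: "sublin (psup :: ('a::topological_space \<Rightarrow>\<^sub>C real) \<Rightarrow> real)"
proof
  fix x y :: "'a \<Rightarrow>\<^sub>C real"
  show "psup (x + y) \<le> psup x + psup y"
    by (rule psup_least) (use psup_upper[of x] psup_upper[of y] in \<open>simp add: add_mono\<close>)
next
  fix c :: real and x :: "'a \<Rightarrow>\<^sub>C real" assume c: "0 \<le> c"
  show "psup (c *\<^sub>R x) = c * psup x"
  proof (cases "c = 0")
    case True
    have "psup (0::'a \<Rightarrow>\<^sub>C real) = 0"
      by (rule antisym) (auto intro: psup_least order_trans[OF _ psup_upper])
    then show ?thesis using True by simp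
  next
    case False
    with c have c: "c > 0" by simp
    show ?thesis
    proof (rule antisym)
      show "psup (c *\<^sub>R x) \<le> c * psup x"
        by (rule psup_least) (use psup_upper[of x] c in \<open>simp add: mult_left_mono\<close>)
      have "psup x \<le> psup (c *\<^sub>R x) / c"
      proof (rule psup_least)
        fix z have "c * apply_bcontfun x z \<le> psup (c *\<^sub>R x)" using psup_upper[of "c *\<^sub>R x" z] by simp
        then show "apply_bcontfun x z \<le> psup (c *\<^sub>R x) / c" using c by (simp add: field_simps)
      qed
      then show "c * psup x \<le> psup (c *\<^sub>R x)" using c by (simp add: field_simps)
    qed
  qed
qed

lemma coupling:
  fixes wA :: "('a::topological_space \<Rightarrow> complex) \<Rightarrow> complex"
    and v :: "('b::topological_space \<Rightarrow> complex) \<Rightarrow> complex"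
  assumes wA: "is_state wA" and v: "is_state v"
  shows "\<exists>w. is_state w \<and> (\<forall>fA\<in>Cb. w (tensor fA (\<lambda>_. 1)) = wA fA) \<and>
      (\<forall>fB\<in>Cb. w (tensor (\<lambda>_. 1) fB) = v fB)"
proof -
  interpret sublin "psup :: ('a \<times> 'b) \<Rightarrow>\<^sub>C real \<Rightarrow> real" by (rule sublin_psup)
  define G0 where "G0 = {(comb gA gB, Re (wA (rf gA)) + Re (v (rf gB))) | gA gB. True}"
  have comb_add: "comb gA gB + comb gA' gB' = comb (gA + gA') (gB + gB')" for gA gA' gB gB'
    by (rule bcontfun_eqI) (simp add: apply_comb)
  have comb_scale: "c *\<^sub>R comb gA gB = comb (c *\<^sub>R gA) (c *\<^sub>R gB)" for c gA gB
    by (rule bcontfun_eqI) (simp add: apply_comb algebra_simps)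
  have comb_0: "comb 0 0 = 0" by (rule bcontfun_eqI) (simp add: apply_comb)
  have "lingraph psup G0"
  proof (rule lingraphI)
    show "(0,0) \<in> G0" unfolding G0_def
      using st_const[OF wA, of 0] st_const[OF v, of 0] comb_0
      by (intro CollectI exI[of _ "0::'a \<Rightarrow>\<^sub>C real"] exI[of _ "0::'b \<Rightarrow>\<^sub>C real"]) (simp add: rf_zero)
  next
    fix x a y b assume "(x,a) \<in> G0" "(y,b) \<in> G0"
    then obtain gA gB gA' gB' where h: "x = comb gA gB" "a = Re (wA (rf gA)) + Re (v (rf gB))"
      "y = comb gA' gB'" "b = Re (wA (rf gA')) + Re (v (rf gB'))" unfolding G0_def by blast
    have "x + y = comb (gA + gA') (gB + gB')" using h comb_add by simp
    moreover have "a + b = Re (wA (rf (gA + gA'))) + Re (v (rf (gB + gB')))"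
      unfolding rf_add h using st_add[OF wA rf_Cb rf_Cb] st_add[OF v rf_Cb rf_Cb] by simp
    ultimately show "(x+y, a+b) \<in> G0" unfolding G0_def by blast
  next
    fix x a c assume "(x,a) \<in> G0"
    then obtain gA gB where h: "x = comb gA gB" "a = Re (wA (rf gA)) + Re (v (rf gB))"
      unfolding G0_def by blast
    have "c *\<^sub>R x = comb (c *\<^sub>R gA) (c *\<^sub>R gB)" using h comb_scale by simp
    moreover have "c * a = Re (wA (rf (c *\<^sub>R gA))) + Re (v (rf (c *\<^sub>R gB)))"
      unfolding rf_scale h using st_scale[OF wA rf_Cb] st_scale[OF v rf_Cb] by (simp add: algebra_simps)
    ultimately show "(c *\<^sub>R x, c*a) \<in> G0" unfolding G0_def by blast
  next
    fix x a assume "(x,a) \<in> G0"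
    then obtain gA gB where h: "x = comb gA gB" "a = Re (wA (rf gA)) + Re (v (rf gB))"
      unfolding G0_def by blast
    have 1: "Re (wA (rf gA)) \<le> psup gA" using st_rf_le[OF wA] unfolding psup_def .
    have 2: "Re (v (rf gB)) \<le> psup gB" using st_rf_le[OF v] unfolding psup_def .
    have 3: "apply_bcontfun gA xa + apply_bcontfun gB y \<le> psup x" for xa y
      using psup_upper[of x "(xa,y)"] h by (simp add: apply_comb)
    have "psup gA \<le> psup x - apply_bcontfun gB y" for y
      by (rule psup_least) (use 3 in \<open>simp add: algebra_simps\<close>)
    then have "psup gB \<le> psup x - psup gA"
      by (intro psup_least) (simp add: algebra_simps)
    then show "a \<le> psup x" using 1 2 h by simp
  qed
  from hahn_banach[OF this] obtain L where
    Ladd: "\<And>x y. L (x + y) = L x + L y" and Lsc: "\<And>c x. L (c *\<^sub>R x) = c * L x" and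
    Lp: "\<And>x. L x \<le> psup x" and LG: "\<And>x a. (x,a) \<in> G0 \<Longrightarrow> L x = a" by blast
  have L0: "L 0 = 0" using Lsc[of 0 0] by simp
  have Lsub: "L (x - y) = L x - L y" for x y
  proof -
    have "L (x - y) = L (x + (-1) *\<^sub>R y)" by simp
    also have "\<dots> = L x + L ((-1) *\<^sub>R y)" by (rule Ladd)
    also have "L ((-1) *\<^sub>R y) = - L y" using Lsc[of "-1" y] by simp
    finally show ?thesis by simp
  qed
  have Lpos: "L h \<ge> 0" if "\<And>z. apply_bcontfun h z \<ge> 0" for h
  proof -
    have "L ((-1) *\<^sub>R h) \<le> psup ((-1) *\<^sub>R h)" by (rule Lp)
    also have "psup ((-1) *\<^sub>R h) \<le> 0" by (rule psup_least) (use that in simp)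
    finally show ?thesis using Lsc[of "-1" h] by simp
  qed
  define one :: "('a \<times> 'b) \<Rightarrow>\<^sub>C real" where "one = const_bcontfun 1"
  have L1: "L one = 1"
  proof -
    have "L one \<le> psup one" by (rule Lp)
    also have "psup one \<le> 1" by (rule psup_least) (simp add: one_def const_bcontfun.rep_eq)
    finally have a: "L one \<le> 1" .
    have "L ((-1) *\<^sub>R one) \<le> psup ((-1) *\<^sub>R one)" by (rule Lp)
    also have "psup ((-1) *\<^sub>R one) \<le> -1" by (rule psup_least) (simp add: one_def const_bcontfun.rep_eq)
    finally have "- L one \<le> -1" using Lsc[of "-1" one] by simp
    with a show ?thesis by simp
  qed
  define w :: "('a \<times> 'b \<Rightarrow> complex) \<Rightarrow> complex" where
    "w f = (if f \<in> Cb then complex_of_real (L (rebc f)) + \<i> * complex_of_real (L (imbc f)) else 0)" for f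
  have "is_state w"
  proof (rule is_stateI)
    fix f g :: "'a \<times> 'b \<Rightarrow> complex" assume f: "f \<in> Cb" and g: "g \<in> Cb"
    have "rebc (\<lambda>x. f x + g x) = rebc f + rebc g" "imbc (\<lambda>x. f x + g x) = imbc f + imbc g"
      by (rule bcontfun_eqI, simp add: apply_rebc apply_imbc f g Cb_add)+
    then show "w (\<lambda>x. f x + g x) = w f + w g"
      unfolding w_def using f g Cb_add[OF f g] Ladd by (simp add: algebra_simps)
  next
    fix c and f :: "'a \<times> 'b \<Rightarrow> complex" assume f: "f \<in> Cb"
    have "rebc (\<lambda>x. c * f x) = Re c *\<^sub>R rebc f + (- Im c) *\<^sub>R imbc f"
      "imbc (\<lambda>x. c * f x) = Re c *\<^sub>R imbc f + Im c *\<^sub>R rebc f"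
      by (rule bcontfun_eqI, simp add: apply_rebc apply_imbc f Cb_cmult)+
    then have e: "L (rebc (\<lambda>x. c * f x)) = Re c * L (rebc f) - Im c * L (imbc f)"
      "L (imbc (\<lambda>x. c * f x)) = Re c * L (imbc f) + Im c * L (rebc f)"
      using Ladd Lsc Lsub by simp_all
    show "w (\<lambda>x. c * f x) = c * w f"
      unfolding w_def using f Cb_cmult[OF f] e by (simp add: complex_eq_iff algebra_simps)
  next
    fix f :: "'a \<times> 'b \<Rightarrow> complex" assume f: "f \<in> Cb"
    have ff: "(\<lambda>x. cnj (f x) * f x) \<in> Cb" by (rule Cb_mult[OF Cb_cnj[OF f] f])
    have "imbc (\<lambda>x. cnj (f x) * f x) = 0"
      by (rule bcontfun_eqI) (simp add: apply_imbc ff)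
    then show "Im (w (\<lambda>x. cnj (f x) * f x)) = 0" unfolding w_def using ff L0 by simp
    have "L (rebc (\<lambda>x. cnj (f x) * f x)) \<ge> 0"
      by (rule Lpos) (simp add: apply_rebc ff)
    then show "Re (w (\<lambda>x. cnj (f x) * f x)) \<ge> 0" unfolding w_def using ff by simp
  next
    have "rebc (\<lambda>x::'a \<times> 'b. 1) = one" "imbc (\<lambda>x::'a \<times> 'b. 1) = 0"
      by (rule bcontfun_eqI, simp add: apply_rebc apply_imbc Cb_const one_def const_bcontfun.rep_eq)+
    then show "w (\<lambda>x. 1) = 1" unfolding w_def using Cb_const L1 L0 by simp
  next
    fix f :: "'a \<times> 'b \<Rightarrow> complex" assume "f \<notin> Cb" then show "w f = 0" unfolding w_def by simp
  qed
  moreover have "w (tensor fA (\<lambda>_. 1)) = wA fA" if fA: "fA \<in> Cb" for fA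
  proof -
    have t: "tensor fA (\<lambda>_. 1) \<in> (Cb :: ('a \<times> 'b \<Rightarrow> complex) set)" by (rule Cb_tensor_A1[OF fA])
    have r: "rebc (tensor fA (\<lambda>_. 1) :: 'a \<times> 'b \<Rightarrow> complex) = comb (rebc fA) 0"
      "imbc (tensor fA (\<lambda>_. 1) :: 'a \<times> 'b \<Rightarrow> complex) = comb (imbc fA) 0"
      by (rule bcontfun_eqI, simp add: apply_rebc apply_imbc t[unfolded tensor_A1] fA apply_comb tensor_A1)+
    have "L (comb (rebc fA) (0::'b \<Rightarrow>\<^sub>C real)) = Re (wA (rf (rebc fA))) + Re (v (rf 0))"
      by (rule LG) (auto simp: G0_def)
    moreover have "L (comb (imbc fA) (0::'b \<Rightarrow>\<^sub>C real)) = Re (wA (rf (imbc fA))) + Re (v (rf 0))"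
      by (rule LG) (auto simp: G0_def)
    moreover have "rf (rebc fA) = (\<lambda>x. complex_of_real (Re (fA x)))" "rf (imbc fA) = (\<lambda>x. complex_of_real (Im (fA x)))"
      by (auto simp: rf_def apply_rebc apply_imbc fA)
    moreover have "Im (wA (rf (rebc fA))) = 0" "Im (wA (rf (imbc fA))) = 0"
      by (rule st_rf_real[OF wA])+
    ultimately show ?thesis unfolding w_def r using t st_decomp[OF wA fA] st_const[OF v, of 0]
      by (simp add: rf_zero complex_eq_iff)
  qed
  moreover have "w (tensor (\<lambda>_. 1) fB) = v fB" if fB: "fB \<in> Cb" for fB
  proof -
    have t: "tensor (\<lambda>_. 1) fB \<in> (Cb :: ('a \<times> 'b \<Rightarrow> complex) set)" by (rule Cb_tensor_1B[OF fB])
    have r: "rebc (tensor (\<lambda>_. 1) fB :: 'a \<times> 'b \<Rightarrow> complex) = comb 0 (rebc fB)"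
      "imbc (tensor (\<lambda>_. 1) fB :: 'a \<times> 'b \<Rightarrow> complex) = comb 0 (imbc fB)"
      by (rule bcontfun_eqI, simp add: apply_rebc apply_imbc t[unfolded tensor_1B] fB apply_comb tensor_1B)+
    have "L (comb (0::'a \<Rightarrow>\<^sub>C real) (rebc fB)) = Re (wA (rf 0)) + Re (v (rf (rebc fB)))"
      by (rule LG) (auto simp: G0_def)
    moreover have "L (comb (0::'a \<Rightarrow>\<^sub>C real) (imbc fB)) = Re (wA (rf 0)) + Re (v (rf (imbc fB)))"
      by (rule LG) (auto simp: G0_def)
    moreover have "rf (rebc fB) = (\<lambda>x. complex_of_real (Re (fB x)))" "rf (imbc fB) = (\<lambda>x. complex_of_real (Im (fB x)))"
      by (auto simp: rf_def apply_rebc apply_imbc fB)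
    moreover have "Im (v (rf (rebc fB))) = 0" "Im (v (rf (imbc fB))) = 0"
      by (rule st_rf_real[OF v])+
    ultimately show ?thesis unfolding w_def r using t st_decomp[OF v fB] st_const[OF wA, of 0]
      by (simp add: rf_zero complex_eq_iff)
  qed
  ultimately show ?thesis by blast
qed

theorem theorem3p1:
  fixes \<tau> :: "((('a::t2_space \<times> 'b::t2_space) \<Rightarrow> complex) \<Rightarrow> complex) \<Rightarrow>
               ((('a \<times> 'b) \<Rightarrow> complex) \<Rightarrow> complex)"
    and wA :: "('a \<Rightarrow> complex) \<Rightarrow> complex"
  assumes "locally_compact_space (euclidean :: 'a topology)"
    and "locally_compact_space (euclidean :: 'b topology)"
    and "operation \<tau>"
    and "wA \<in> states"
  shows "\<exists>w\<in>states.
           (\<forall>fA\<in>Cb. w (tensor fA (\<lambda>_. 1)) = wA fA) \<and>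
           (\<forall>fB\<in>(Cb :: ('b \<Rightarrow> complex) set). \<tau> w (tensor (\<lambda>_. 1) fB) = w (tensor (\<lambda>_. 1) fB))"
proof -
  have wA: "is_state wA" using assms(4) by (simp add: states_def)
  have op_st: "\<And>w. is_state w \<Longrightarrow> is_state (\<tau> w)"
    using assms(3) unfolding operation_def states_def by blast
  have op_aff: "\<And>(I::nat set) (c::nat \<Rightarrow> real) ws. finite I \<Longrightarrow> (\<forall>k\<in>I. c k \<ge> 0 \<and> ws k \<in> states) \<Longrightarrow> sum c I = 1 \<Longrightarrow>
        \<tau> (\<lambda>f. \<Sum>k\<in>I. complex_of_real (c k) * ws k f) =
          (\<lambda>f. \<Sum>k\<in>I. complex_of_real (c k) * \<tau> (ws k) f)"
    using assms(3) unfolding operation_def by blast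
  have op_cont: "\<And>F w. eventually (\<lambda>v. v \<in> states) F \<Longrightarrow> w \<in> states \<Longrightarrow> weakly_converges F w \<Longrightarrow>
        weakly_converges (filtermap \<tau> F) (\<tau> w)"
    using assms(3) unfolding operation_def by blast
  define P where "P v w \<longleftrightarrow> is_state w \<and> (\<forall>fA\<in>Cb. w (tensor fA (\<lambda>_. 1)) = wA fA) \<and>
      (\<forall>fB\<in>Cb. w (tensor (\<lambda>_. 1) fB) = v fB)" for v :: "('b \<Rightarrow> complex) \<Rightarrow> complex" and w :: "('a \<times> 'b \<Rightarrow> complex) \<Rightarrow> complex"
  define cpl where "cpl v = (SOME w. P v w)" for v
  have PD1: "is_state w" if "P v w" for v w using that unfolding P_def by simp
  have PD2: "w (tensor fA (\<lambda>_. 1)) = wA fA" if "P v w" "fA \<in> Cb" for v w fA using that unfolding P_def by simp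
  have PD3: "w (tensor (\<lambda>_. 1) fB) = v fB" if "P v w" "fB \<in> Cb" for v w fB using that unfolding P_def by simp
  have cpl: "P v (cpl v)" if "is_state v" for v
  proof -
    have "\<exists>w. P v w" unfolding P_def using coupling[OF wA that] .
    from someI_ex[OF this] show ?thesis unfolding cpl_def .
  qed
  define ws where "ws = rec_nat (cpl (pt (undefined::'b))) (\<lambda>k u. cpl (margB (\<tau> u)))"
  have ws0: "ws 0 = cpl (pt undefined)" and wsS: "ws (Suc k) = cpl (margB (\<tau> (ws k)))" for k
    by (simp_all add: ws_def)
  have wsP: "ws 0 = cpl (pt undefined) \<and> P (pt undefined) (ws 0)"
    using cpl[OF pt_state] ws0 by simp
  have ws_state: "is_state (ws k)" for k
  proof (induction k)
    case 0 then show ?case using wsP PD1 by blast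
  next
    case (Suc k)
    have "P (margB (\<tau> (ws k))) (ws (Suc k))" unfolding wsS by (rule cpl[OF margB_state[OF op_st[OF Suc]]])
    then show ?case by (rule PD1)
  qed
  have wsA: "ws k (tensor fA (\<lambda>_. 1)) = wA fA" if "fA \<in> Cb" for k fA
  proof (cases k)
    case 0 then show ?thesis using wsP PD2[OF _ that] by blast
  next
    case (Suc j)
    have "P (margB (\<tau> (ws j))) (ws (Suc j))" unfolding wsS by (rule cpl[OF margB_state[OF op_st[OF ws_state]]])
    then show ?thesis using PD2[OF _ that] Suc by blast
  qed
  have wsB: "ws (Suc k) (tensor (\<lambda>_. 1) fB) = \<tau> (ws k) (tensor (\<lambda>_. 1) fB)" if "fB \<in> Cb" for k fB
  proof -
    have "P (margB (\<tau> (ws k))) (ws (Suc k))" unfolding wsS by (rule cpl[OF margB_state[OF op_st[OF ws_state]]])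
    then have "ws (Suc k) (tensor (\<lambda>_. 1) fB) = margB (\<tau> (ws k)) fB" using PD3[OF _ that] by blast
    then show ?thesis using that by (simp add: margB_def)
  qed
  define W where "W n = (\<lambda>f. \<Sum>k\<in>{..<Suc n}. complex_of_real (1 / real (Suc n)) * ws k f)" for n
  have sumc: "(\<Sum>k\<in>{..<Suc n}. 1 / real (Suc n)) = 1" for n by simp
  have W_state: "is_state (W n)" for n
    unfolding W_def by (rule st_convex) (auto simp: ws_state)
  have W_tau: "\<tau> (W n) = (\<lambda>f. \<Sum>k\<in>{..<Suc n}. complex_of_real (1 / real (Suc n)) * \<tau> (ws k) f)" for n
    unfolding W_def by (rule op_aff) (auto simp: ws_state statesI)
  have WA: "W n (tensor fA (\<lambda>_. 1)) = wA fA" if "fA \<in> Cb" for n fA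
  proof -
    have "1 + complex_of_nat n \<noteq> 0"
      using of_nat_eq_0_iff[of "Suc n", where 'a=complex] unfolding of_nat_Suc by simp
    then show ?thesis unfolding W_def using wsA[OF that] by simp
  qed
  have Wdiff: "\<tau> (W n) (tensor (\<lambda>_. 1) fB) - W n (tensor (\<lambda>_. 1) fB) =
      complex_of_real (1 / real (Suc n)) * (ws (Suc n) (tensor (\<lambda>_. 1) fB) - ws 0 (tensor (\<lambda>_. 1) fB))"
    if "fB \<in> Cb" for n fB
  proof -
    let ?g = "tensor (\<lambda>_. 1) fB :: 'a \<times> 'b \<Rightarrow> complex"
    let ?c = "complex_of_real (1 / real (Suc n))"
    have e1: "\<tau> (W n) ?g = (\<Sum>k\<in>{..<Suc n}. ?c * ws (Suc k) ?g)"
      unfolding W_tau using wsB[OF that] by simp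
    have e2: "W n ?g = (\<Sum>k\<in>{..<Suc n}. ?c * ws k ?g)" unfolding W_def ..
    have "\<tau> (W n) ?g - W n ?g = ?c * (\<Sum>k\<in>{..<Suc n}. ws (Suc k) ?g - ws k ?g)"
      unfolding e1 e2 by (simp only: sum_subtractf[symmetric] right_diff_distrib sum_distrib_left)
    also have "(\<Sum>k\<in>{..<Suc n}. ws (Suc k) ?g - ws k ?g) = ws (Suc n) ?g - ws 0 ?g"
      by (rule sum_lessThan_telescope)
    finally show ?thesis .
  qed
  have Wlim: "(\<lambda>n. \<tau> (W n) (tensor (\<lambda>_. 1) fB) - W n (tensor (\<lambda>_. 1) fB)) \<longlonglongrightarrow> 0" if "fB \<in> Cb" for fB
  proof -
    let ?g = "tensor (\<lambda>_. 1) fB :: 'a \<times> 'b \<Rightarrow> complex"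
    have b: "norm (ws (Suc n) ?g - ws 0 ?g) \<le> 2 * bnd ?g" for n
      using norm_triangle_ineq4[of "ws (Suc n) ?g" "ws 0 ?g"] st_bnd[OF ws_state, of "Suc n" ?g]
        st_bnd[OF ws_state, of 0 ?g] by linarith
    have "(\<lambda>n. inverse (real (Suc n)) * (2 * bnd ?g)) \<longlonglongrightarrow> 0 * (2 * bnd ?g)"
      by (rule tendsto_mult[OF LIMSEQ_inverse_real_of_nat tendsto_const])
    then have lim: "(\<lambda>n. inverse (real (Suc n)) * (2 * bnd ?g)) \<longlonglongrightarrow> 0" by (simp only: mult_zero_left)
    have ev: "norm (\<tau> (W n) ?g - W n ?g) \<le> inverse (real (Suc n)) * (2 * bnd ?g)" for n
    proof -
      have eq: "norm (\<tau> (W n) ?g - W n ?g) = inverse (real (Suc n)) * norm (ws (Suc n) ?g - ws 0 ?g)"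
        unfolding Wdiff[OF that] norm_mult norm_of_real by (simp add: divide_inverse)
      have "inverse (real (Suc n)) * norm (ws (Suc n) ?g - ws 0 ?g) \<le> inverse (real (Suc n)) * (2 * bnd ?g)"
        by (rule mult_left_mono[OF b]) simp
      then show ?thesis unfolding eq .
    qed
    show ?thesis by (rule Lim_null_comparison[OF always_eventually lim]) (use ev in blast)
  qed
  define F where "F = filtermap W sequentially"
  have Fnb: "F \<noteq> bot" unfolding F_def by (simp add: filtermap_bot_iff)
  have Fst: "eventually (\<lambda>v. v \<in> states) F"
    unfolding F_def eventually_filtermap using W_state by (simp add: statesI)
  have "\<exists>x\<in>states. inf (nhds x) F \<noteq> bot"
    using states_compact[unfolded compact_filter, rule_format, OF Fnb Fst] .
  then obtain Ws where Ws: "Ws \<in> states" and Gnb: "inf (nhds Ws) F \<noteq> bot" by (elim bexE)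
  define G where "G = inf (nhds Ws) F"
  have GF: "G \<le> F" and GN: "G \<le> nhds Ws" unfolding G_def by simp_all
  have Gnb': "G \<noteq> bot" using Gnb G_def by simp
  have Gst: "eventually (\<lambda>v. v \<in> states) G" by (rule filter_leD[OF GF Fst])
  have ev_lim: "((\<lambda>v. v f) \<longlongrightarrow> Ws f) G" for f :: "'a \<times> 'b \<Rightarrow> complex"
  proof -
    have "continuous_on UNIV (\<lambda>v::('a \<times> 'b \<Rightarrow> complex) \<Rightarrow> complex. v f)"
      by (rule continuous_on_product_coordinates)
    then have "((\<lambda>v. v f) \<longlongrightarrow> Ws f) (at Ws within UNIV)" unfolding continuous_on_def by blast
    then have "((\<lambda>v. v f) \<longlongrightarrow> Ws f) (nhds Ws)" using tendsto_at_iff_tendsto_nhds[of "\<lambda>v. v f" Ws] by simp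
    then show ?thesis by (rule tendsto_mono[OF GN])
  qed
  have wc: "weakly_converges G Ws" unfolding weakly_converges_def using ev_lim by blast
  have tau_lim: "((\<lambda>v. \<tau> v f) \<longlongrightarrow> \<tau> Ws f) G" if "f \<in> Cb" for f
  proof -
    have "weakly_converges (filtermap \<tau> G) (\<tau> Ws)" by (rule op_cont[OF Gst Ws wc])
    then have "((\<lambda>u. u f) \<longlongrightarrow> \<tau> Ws f) (filtermap \<tau> G)" unfolding weakly_converges_def using that by blast
    then show ?thesis by (simp add: filterlim_filtermap)
  qed
  show ?thesis
  proof (intro bexI[OF _ Ws] conjI ballI)
    fix fA :: "'a \<Rightarrow> complex" assume fA: "fA \<in> Cb"
    let ?h = "tensor fA (\<lambda>_. 1) :: 'a \<times> 'b \<Rightarrow> complex"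
    have "eventually (\<lambda>v. v ?h = wA fA) F"
      unfolding F_def eventually_filtermap using WA[OF fA] by simp
    then have "((\<lambda>v. v ?h) \<longlongrightarrow> wA fA) G" by (intro tendsto_eventually filter_leD[OF GF])
    from tendsto_unique[OF Gnb' ev_lim this] show "Ws ?h = wA fA" .
  next
    fix fB :: "'b \<Rightarrow> complex" assume fB: "fB \<in> Cb"
    let ?g = "tensor (\<lambda>_. 1) fB :: 'a \<times> 'b \<Rightarrow> complex"
    have "((\<lambda>v. \<tau> v ?g - v ?g) \<longlongrightarrow> \<tau> Ws ?g - Ws ?g) G"
      by (intro tendsto_diff tau_lim ev_lim Cb_tensor_1B fB)
    moreover have "((\<lambda>v. \<tau> v ?g - v ?g) \<longlongrightarrow> 0) G"
    proof -
      have "((\<lambda>v. \<tau> v ?g - v ?g) \<longlongrightarrow> 0) F"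
        unfolding F_def filterlim_filtermap using Wlim[OF fB] .
      then show ?thesis by (rule tendsto_mono[OF GF])
    qed
    ultimately have "\<tau> Ws ?g - Ws ?g = 0" by (rule tendsto_unique[OF Gnb'])
    then show "\<tau> Ws ?g = Ws ?g" by simp
  qed
qed

end
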